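(* Let $\Pi$ be a min-FGPP with $\alpha_1\ge0$ and $\alpha_2>0$. Let $(G=(V,E),k,p)$ be an instance of $\Pi$, write $V=\{v_1,\dots,v_{|V|}\}$, and let $\mathcal{F}$ be a $(|V|,k+\frac{p}{\alpha_2})$-universal set. For each $f\in\mathcal{F}$ let $G_f$ be a copy of $G$ in which the copy of $v_i$ is colored red if $f(i)=0$ and blue if $f(i)=1$. Then $(G,k,p)$ is a yes-instance of $\Pi$ if and only if at least one of the instances $(G_f,k,p)$, $f\in\mathcal{F}$, is a yes-instance of NC-$\Pi$.
   Context: Graphs are finite, simple and undirected. For $X\subseteq V$, $E(X)$ is the set of edges with both endpoints in $X$, $E(X,V\setminus X)$ the set of edges with exactly one endpoint in $X$, and $\mathrm{val}(X)=\alpha_1|E(X)|+\alpha_2|E(X,V\setminus X)|$. The min-FGPP $\Pi$: given $G=(V,E)$, $k\in\mathbb{N}$, $p\in\mathbb{R}$, decide whether some $X\subseteq V$ with $|X|=k$ has $\mathrm{val}(X)\le p$. NC-$\Pi$: given a graph $G=(V,E)$ each of whose nodes is colored red or blue, $k\in\mathbb{N}$ and $p\in\mathbb{R}$, decide whether there is $X\subseteq V$ consisting of exactly $k$ red nodes and no blue nodes, such that every node outside $X$ adjacent to a node of $X$ is blue, and $\mathrm{val}(X)\le p$. For real $t\ge0$, a set $\mathcal{F}$ of functions $\{1,\dots,n\}\to\{0,1\}$ is an $(n,t)$-universal set if for every $I\subseteq\{1,\dots,n\}$ with $|I|\le t$ and every $f':I\to\{0,1\}$ there is $f\in\mathcal{F}$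 with $f(i)=f'(i)$ for all $i\in I$. *)

theory Defs
  imports Complex_Main
begin

definition simple_graph :: "'a set \<Rightarrow> 'a set set \<Rightarrow> bool" where
  "simple_graph V E \<longleftrightarrow> finite V \<and> (\<forall>e\<in>E. e \<subseteq> V \<and> card e = 2)"

definition inner_edges :: "'a set set \<Rightarrow> 'a set \<Rightarrow> 'a set set" where
  "inner_edges E X = {e \<in> E. e \<subseteq> X}"

definition cut_edges :: "'a set set \<Rightarrow> 'a set \<Rightarrow> 'a set set" where
  "cut_edges E X = {e \<in> E. card (e \<inter> X) = 1}"

definition fgpp_val :: "real \<Rightarrow> real \<Rightarrow> 'a set set \<Rightarrow> 'a set \<Rightarrow> real" where
  "fgpp_val a1 a2 E X = a1 * real (card (inner_edges E X)) + a2 * real (card (cut_edges E X))"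

definition fgpp_yes :: "real \<Rightarrow> real \<Rightarrow> 'a set \<Rightarrow> 'a set set \<Rightarrow> nat \<Rightarrow> real \<Rightarrow> bool" where
  "fgpp_yes a1 a2 V E k p \<longleftrightarrow>
     (\<exists>X. X \<subseteq> V \<and> card X = k \<and> fgpp_val a1 a2 E X \<le> p)"

text \<open>Yes-instance of NC-\<Pi>: Red is the set of red nodes, V - Red the blue nodes.\<close>
definition nc_fgpp_yes :: "real \<Rightarrow> real \<Rightarrow> 'a set \<Rightarrow> 'a set set \<Rightarrow> 'a set \<Rightarrow> nat \<Rightarrow> real \<Rightarrow> bool" where
  "nc_fgpp_yes a1 a2 V E Red k p \<longleftrightarrow>
     (\<exists>X. X \<subseteq> V \<and> X \<subseteq> Red \<and> card X = k \<and>
          (\<forall>u \<in> V - X. (\<exists>x\<in>X. {u, x} \<in> E) \<longrightarrow> u \<in> V - Red) \<and>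
          fgpp_val a1 a2 E X \<le> p)"

text \<open>(n,t)-universal set of functions {1..n} -> {0,1} (values outside {1..n} irrelevant).\<close>
definition universal_set :: "nat \<Rightarrow> real \<Rightarrow> (nat \<Rightarrow> nat) set \<Rightarrow> bool" where
  "universal_set n t F \<longleftrightarrow>
     (\<forall>f\<in>F. \<forall>i\<in>{1..n}. f i \<in> {0,1}) \<and>
     (\<forall>I g. I \<subseteq> {1..n} \<and> real (card I) \<le> t \<and> (\<forall>i\<in>I. g i \<in> {0::nat,1}) \<longrightarrow>
        (\<exists>f\<in>F. \<forall>i\<in>I. f i = g i))"

definition red_nodes :: "(nat \<Rightarrow> 'a) \<Rightarrow> nat \<Rightarrow> (nat \<Rightarrow> nat) \<Rightarrow> 'a set" where
  "red_nodes v n f = {v i | i. i \<in> {1..n} \<and> f i = 0}"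

end

theory Submission
  imports Defs
begin

theorem lemma11:
  fixes a1 a2 p :: real and k :: nat and V :: "'a set" and E :: "'a set set"
    and v :: "nat \<Rightarrow> 'a" and F :: "(nat \<Rightarrow> nat) set"
  assumes "a1 \<ge> 0" and "a2 > 0"
    and "simple_graph V E"
    and "bij_betw v {1..card V} V"
    and "universal_set (card V) (real k + p / a2) F"
  shows "fgpp_yes a1 a2 V E k p \<longleftrightarrow>
         (\<exists>f\<in>F. nc_fgpp_yes a1 a2 V E (red_nodes v (card V) f) k p)"
proof
  assume "\<exists>f\<in>F. nc_fgpp_yes a1 a2 V E (red_nodes v (card V) f) k p"
  then show "fgpp_yes a1 a2 V E k p" unfolding nc_fgpp_yes_def fgpp_yes_def by blast
next
  assume "fgpp_yes a1 a2 V E k p"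
  then obtain X where XV: "X \<subseteq> V" and Xk: "card X = k" and Xp: "fgpp_val a1 a2 E X \<le> p"
    unfolding fgpp_yes_def by blast
  define n where "n = card V"
  have finV: "finite V" using assms(3) by (simp add: simple_graph_def)
  have finE: "finite E"
  proof -
    have "E \<subseteq> Pow V" using assms(3) by (auto simp: simple_graph_def)
    thus ?thesis using finV by (meson finite_Pow_iff finite_subset)
  qed
  define N where "N = {u \<in> V - X. \<exists>x\<in>X. {u,x} \<in> E}"
  have finN: "finite N" using finV by (simp add: N_def)
  have finX: "finite X" using finV XV finite_subset by blast
  define h where "h u = {u, SOME x. x\<in>X \<and> {u,x}\<in>E}" for u
  have hprop: "h u \<in> E \<and> (SOME x. x\<in>X \<and> {u,x}\<in>E) \<in> X" if "u \<in> N" for u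
  proof -
    have "\<exists>x. x\<in>X \<and> {u,x}\<in>E" using that by (auto simp: N_def)
    from someI_ex[OF this] show ?thesis by (simp add: h_def)
  qed
  have "inj_on h N"
  proof (rule inj_onI)
    fix u w assume u: "u \<in> N" and w: "w \<in> N" and eq: "h u = h w"
    have "u \<notin> X" "w \<notin> X" using u w by (auto simp: N_def)
    have "u \<in> h u" by (simp add: h_def)
    hence "u \<in> h w" using eq by simp
    hence "u = w \<or> u = (SOME x. x\<in>X \<and> {w,x}\<in>E)" by (simp add: h_def)
    thus "u = w" using hprop[OF w] \<open>u \<notin> X\<close> by metis
  qed
  moreover have "h ` N \<subseteq> cut_edges E X"
  proof
    fix e assume "e \<in> h ` N"
    then obtain u where u: "u \<in> N" and e: "e = h u" by blast
    let ?x = "SOME x. x\<in>X \<and> {u,x}\<in>E"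
    have "u \<notin> X" using u by (auto simp: N_def)
    hence "e \<inter> X = {?x}" using hprop[OF u] by (auto simp: e h_def)
    thus "e \<in> cut_edges E X" using hprop[OF u] e by (simp add: cut_edges_def)
  qed
  ultimately have cN: "card N \<le> card (cut_edges E X)"
  proof -
    have "finite (cut_edges E X)" using finE by (simp add: cut_edges_def)
    thus ?thesis using card_inj_on_le \<open>inj_on h N\<close> \<open>h ` N \<subseteq> cut_edges E X\<close> by blast
  qed
  have "a2 * real (card (cut_edges E X)) \<le> p"
    using Xp assms(1) unfolding fgpp_val_def
    by (smt (verit) of_nat_0_le_iff zero_le_mult_iff)
  hence "a2 * real (card N) \<le> p" using cN assms(2)
    by (smt (verit) mult_left_mono of_nat_mono)
  hence cNp: "real (card N) \<le> p / a2" using assms(2) by (simp add: field_simps)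
  have disj: "X \<inter> N = {}" by (auto simp: N_def)
  have cXN: "card (X \<union> N) = k + card N" using card_Un_disjoint[OF finX finN disj] Xk by simp
  define I where "I = {i\<in>{1..n}. v i \<in> X \<union> N}"
  define g where "g i = (if v i \<in> X then 0 else (1::nat))" for i
  have bij: "bij_betw v {1..n} V" using assms(4) n_def by simp
  have cardlem: "XN \<subseteq> V \<Longrightarrow> card {i\<in>{1..n}. v i \<in> XN} = card XN" for XN
  proof -
    assume s: "XN \<subseteq> V"
    have inj0: "inj_on v {1..n}" and im: "v ` {1..n} = V" using bij by (auto simp: bij_betw_def)
    have "inj_on v {i\<in>{1..n}. v i \<in> XN}" using inj0 by (rule inj_on_subset) auto
    moreover have "v ` {i\<in>{1..n}. v i \<in> XN} = XN"
    proof
      show "XN \<subseteq> v ` {i\<in>{1..n}. v i \<in> XN}"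
      proof
        fix y assume y: "y \<in> XN"
        then obtain i where "i \<in> {1..n}" "v i = y" using s im by blast
        thus "y \<in> v ` {i\<in>{1..n}. v i \<in> XN}" using y by blast
      qed
    qed auto
    ultimately have "bij_betw v {i\<in>{1..n}. v i \<in> XN} XN" by (simp add: bij_betw_def)
    thus ?thesis by (simp add: bij_betw_same_card)
  qed
  have "X \<union> N \<subseteq> V" using XV by (auto simp: N_def)
  from cardlem[OF this] have cI: "card I = k + card N" using cXN unfolding I_def by simp
  have "I \<subseteq> {1..card V}" "real (card I) \<le> real k + p / a2" "\<forall>i\<in>I. g i \<in> {0,1}"
    using cI cNp by (auto simp: I_def n_def g_def)
  then obtain f where fF: "f \<in> F" and fg: "\<forall>i\<in>I. f i = g i"
    using assms(5) unfolding universal_set_def by blast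
  let ?R = "red_nodes v (card V) f"
  have inj: "inj_on v {1..n}" using bij bij_betw_def by blast
  have "X \<subseteq> ?R"
  proof
    fix x assume x: "x \<in> X"
    then obtain i where i: "i \<in> {1..n}" "v i = x" using bij XV unfolding bij_betw_def by blast
    hence "i \<in> I" using x by (simp add: I_def)
    hence "f i = 0" using fg i x by (simp add: g_def)
    thus "x \<in> ?R" using i by (auto simp: red_nodes_def n_def)
  qed
  moreover have "\<forall>u \<in> V - X. (\<exists>x\<in>X. {u, x} \<in> E) \<longrightarrow> u \<in> V - ?R"
  proof (intro ballI impI)
    fix u assume u: "u \<in> V - X" and "\<exists>x\<in>X. {u, x} \<in> E"
    hence uN: "u \<in> N" by (simp add: N_def)
    then obtain i where i: "i \<in> {1..n}" "v i = u" using bij u unfolding bij_betw_def by blast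
    hence "i \<in> I" using uN by (simp add: I_def)
    hence fi: "f i = 1" using fg i u by (simp add: g_def)
    have "u \<notin> ?R"
    proof
      assume "u \<in> ?R"
      then obtain j where j: "j \<in> {1..n}" "f j = 0" "v j = u" by (auto simp: red_nodes_def n_def)
      hence "j = i" using inj i unfolding inj_on_def by metis
      thus False using fi j by simp
    qed
    thus "u \<in> V - ?R" using u by simp
  qed
  ultimately have "nc_fgpp_yes a1 a2 V E ?R k p"
    unfolding nc_fgpp_yes_def using XV Xk Xp by blast
  thus "\<exists>f\<in>F. nc_fgpp_yes a1 a2 V E (red_nodes v (card V) f) k p" using fF by blast
qed

end
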